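(* Let $G$ be an arbitrary group and let $S=\bigoplus_{g\in G}S_g$ be an epsilon-strongly $G$-graded ring with principal component $R=S_e$. If $\mathrm{Supp}(S)$ is finite and $R$ is left (respectively right) artinian, then $S$ is left (respectively right) artinian.
   Context: All rings are associative with multiplicative identity $1\neq 0$. A ring $S$ is $G$-graded if $S=\bigoplus_{g\in G}S_g$ for additive subgroups $S_g$ with $S_gS_h\subseteq S_{gh}$ for all $g,h\in G$; $S_e$ is the principal component, and $\mathrm{Supp}(S)=\{g\in G:S_g\neq\{0\}\}$. $S$ is epsilon-strongly $G$-graded if (a) $S_gS_{g^{-1}}S_g=S_g$ for all $g\in G$, and (b) for each $g\in G$ the ideal $S_gS_{g^{-1}}$ of $S_e$ has a multiplicative identity. *)

theory Defs
  imports Main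
begin

text \<open>The ring S is the whole type 'a (class ring_1, which includes 1 \<noteq> 0).
  The group G is a type 'g of class group_add (written additively: g + h is the
  group product, 0 the identity e, - g the inverse).\<close>

definition additive_subgroup :: "'a::ring_1 set \<Rightarrow> bool" where
  "additive_subgroup A \<longleftrightarrow> 0 \<in> A \<and> (\<forall>x\<in>A. \<forall>y\<in>A. x - y \<in> A)"

definition setmul :: "'a::ring_1 set \<Rightarrow> 'a set \<Rightarrow> 'a set" where
  "setmul A B = {x. \<exists>(n::nat) a b. (\<forall>i<n. a i \<in> A \<and> b i \<in> B) \<and> x = (\<Sum>i<n. a i * b i)}"

definition graded_ring :: "('g::group_add \<Rightarrow> 'a::ring_1 set) \<Rightarrow> bool" where
  "graded_ring S \<longleftrightarrow>
     (\<forall>g. additive_subgroup (S g)) \<and>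
     (\<forall>g h. \<forall>x\<in>S g. \<forall>y\<in>S h. x * y \<in> S (g + h)) \<and>
     (\<forall>x::'a. \<exists>!f. finite {g. f g \<noteq> 0} \<and> (\<forall>g. f g \<in> S g) \<and>
                   x = (\<Sum>g\<in>{g. f g \<noteq> 0}. f g))"

definition has_mult_identity :: "'a::ring_1 set \<Rightarrow> bool" where
  "has_mult_identity I \<longleftrightarrow> (\<exists>u\<in>I. \<forall>x\<in>I. u * x = x \<and> x * u = x)"

definition epsilon_strongly_graded :: "('g::group_add \<Rightarrow> 'a::ring_1 set) \<Rightarrow> bool" where
  "epsilon_strongly_graded S \<longleftrightarrow> graded_ring S \<and>
     (\<forall>g. setmul (setmul (S g) (S (- g))) (S g) = S g) \<and>
     (\<forall>g. has_mult_identity (setmul (S g) (S (- g))))"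

definition support :: "('g \<Rightarrow> 'a::ring_1 set) \<Rightarrow> 'g set" where
  "support S = {g. S g \<noteq> {0}}"

definition left_ideal_of :: "'a::ring_1 set \<Rightarrow> 'a set \<Rightarrow> bool" where
  "left_ideal_of R I \<longleftrightarrow> I \<subseteq> R \<and> additive_subgroup I \<and> (\<forall>r\<in>R. \<forall>x\<in>I. r * x \<in> I)"

definition right_ideal_of :: "'a::ring_1 set \<Rightarrow> 'a set \<Rightarrow> bool" where
  "right_ideal_of R I \<longleftrightarrow> I \<subseteq> R \<and> additive_subgroup I \<and> (\<forall>r\<in>R. \<forall>x\<in>I. x * r \<in> I)"

definition left_artinian :: "'a::ring_1 set \<Rightarrow> bool" where
  "left_artinian R \<longleftrightarrow> (\<forall>I :: nat \<Rightarrow> 'a set.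
     (\<forall>n. left_ideal_of R (I n)) \<and> (\<forall>n. I (Suc n) \<subseteq> I n) \<longrightarrow> (\<exists>N. \<forall>n\<ge>N. I n = I N))"

definition right_artinian :: "'a::ring_1 set \<Rightarrow> bool" where
  "right_artinian R \<longleftrightarrow> (\<forall>I :: nat \<Rightarrow> 'a set.
     (\<forall>n. right_ideal_of R (I n)) \<and> (\<forall>n. I (Suc n) \<subseteq> I n) \<longrightarrow> (\<exists>N. \<forall>n\<ge>N. I n = I N))"

end

theory Submission
  imports Defs
begin

lemma as_0: "additive_subgroup A \<Longrightarrow> 0 \<in> A"
  unfolding additive_subgroup_def by blast
lemma as_diff: "additive_subgroup A \<Longrightarrow> x \<in> A \<Longrightarrow> y \<in> A \<Longrightarrow> x - y \<in> A"
  unfolding additive_subgroup_def by blast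
lemma as_neg: "additive_subgroup A \<Longrightarrow> x \<in> A \<Longrightarrow> - x \<in> A"
  using as_diff[of A 0 x] as_0[of A] by simp
lemma as_add: "additive_subgroup A \<Longrightarrow> x \<in> A \<Longrightarrow> y \<in> A \<Longrightarrow> x + y \<in> A"
  using as_diff[of A x "- y"] as_neg[of A y] by simp

lemma setmul_induct:
  assumes "x \<in> setmul A B" "P 0" "\<And>u v. P u \<Longrightarrow> P v \<Longrightarrow> P (u+v)"
    "\<And>a b. a\<in>A \<Longrightarrow> b\<in>B \<Longrightarrow> P (a*b)"
  shows "P x"
proof -
  have "\<exists>(n::nat) a b. (\<forall>i<n. a i \<in> A \<and> b i \<in> B) \<and> x = (\<Sum>i<n. a i * b i)"
    using assms(1) unfolding setmul_def by simp
  then obtain n :: nat and a b where ab: "\<forall>i<n. a i \<in> A \<and> b i \<in> B"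
    and x: "x = (\<Sum>i<n. a i * b i)" by blast
  have "m \<le> n \<Longrightarrow> P (\<Sum>i<m. a i * b i)" for m
  proof (induction m)
    case 0 then show ?case using assms(2) by simp
  next
    case (Suc m)
    then have "P (\<Sum>i<m. a i * b i)" by simp
    moreover have "P (a m * b m)" using ab Suc.prems assms(4) by simp
    ultimately show ?case using assms(3) by simp
  qed
  then show ?thesis using x by simp
qed

lemma setmul_single: "a\<in>A \<Longrightarrow> b\<in>B \<Longrightarrow> a*b \<in> setmul A B"
  unfolding setmul_def
  by (rule CollectI, rule exI[of _ 1], rule exI[of _ "\<lambda>_. a"], rule exI[of _ "\<lambda>_. b"]) simp

definition isSub :: "'a::ring_1 set \<Rightarrow> ('a \<Rightarrow> 'a \<Rightarrow> 'a) \<Rightarrow> 'a set \<Rightarrow> bool" where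
  "isSub R act A \<longleftrightarrow> additive_subgroup A \<and> (\<forall>r\<in>R. \<forall>x\<in>A. act r x \<in> A)"

definition goodF :: "'a::ring_1 set \<Rightarrow> ('a \<Rightarrow> 'a \<Rightarrow> 'a) \<Rightarrow> ('a \<Rightarrow> 'a) \<Rightarrow> bool" where
  "goodF R act f \<longleftrightarrow> (\<forall>x y. f (x - y) = f x - f y) \<and> (\<forall>x. f x \<in> R) \<and>
      (\<forall>r\<in>R. \<forall>x. f (act r x) = act r (f x))"

lemma dcc_transfer:
  fixes act :: "'a::ring_1 \<Rightarrow> 'a \<Rightarrow> 'a" and F :: "('a \<Rightarrow> 'a) set"
  assumes "finite F"
  and art: "\<And>I::nat\<Rightarrow>'a set. (\<forall>n. I n \<subseteq> R \<and> isSub R act (I n)) \<Longrightarrow>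
        (\<forall>n. I (Suc n) \<subseteq> I n) \<Longrightarrow> \<exists>N. \<forall>n\<ge>N. I n = I N"
  and act0: "\<And>r. act r 0 = 0"
  shows "(\<forall>f\<in>F. goodF R act f) \<longrightarrow> (\<forall>M::nat\<Rightarrow>'a set. (\<forall>k. isSub R act (M k)) \<and> (\<forall>k. M (Suc k) \<subseteq> M k)
     \<and> (\<forall>k. \<forall>x\<in>M k. (\<forall>f\<in>F. f x = 0) \<longrightarrow> x = 0) \<longrightarrow> (\<exists>N. \<forall>n\<ge>N. M n = M N))"
  using assms(1)
proof (induction F rule: finite_induct)
  case empty
  show ?case
  proof (intro impI allI)
    fix M :: "nat \<Rightarrow> 'a set"
    assume H: "(\<forall>k. isSub R act (M k)) \<and> (\<forall>k. M (Suc k) \<subseteq> M k)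
     \<and> (\<forall>k. \<forall>x\<in>M k. (\<forall>f\<in>{}. f x = 0) \<longrightarrow> x = 0)"
    have "M n = {0}" for n
    proof -
      have "\<forall>x\<in>M n. x = 0" using H by simp
      moreover have "0 \<in> M n" using H as_0[of "M n"] unfolding isSub_def by blast
      ultimately show ?thesis by blast
    qed
    then show "\<exists>N. \<forall>n\<ge>N. M n = M N" by auto
  qed
next
  case (insert f F)
  show ?case
  proof (intro impI allI)
    fix M :: "nat \<Rightarrow> 'a set"
    assume HF: "\<forall>f\<in>insert f F. goodF R act f"
    assume H: "(\<forall>k. isSub R act (M k)) \<and> (\<forall>k. M (Suc k) \<subseteq> M k)
     \<and> (\<forall>k. \<forall>x\<in>M k. (\<forall>f\<in>insert f F. f x = 0) \<longrightarrow> x = 0)"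
    have gf: "goodF R act f" using HF by simp
    have fd: "f (x - y) = f x - f y" for x y using gf unfolding goodF_def by blast
    have fR: "f x \<in> R" for x using gf unfolding goodF_def by blast
    have fa: "r \<in> R \<Longrightarrow> f (act r x) = act r (f x)" for r x using gf unfolding goodF_def by blast
    have f0: "f 0 = 0" using fd[of 0 0] by simp
    have Hs: "isSub R act (M k)" for k using H by (elim conjE) (erule spec)
    have Hinj: "\<And>k x. x \<in> M k \<Longrightarrow> \<forall>g\<in>insert f F. g x = 0 \<Longrightarrow> x = 0"
    proof -
      have H3: "\<forall>k. \<forall>x\<in>M k. (\<forall>g\<in>insert f F. g x = 0) \<longrightarrow> x = 0" using H by (elim conjE) assumption
      fix k x assume "x \<in> M k" "\<forall>g\<in>insert f F. g x = 0"
      then show "x = 0" using H3 by blast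
    qed
    have Mdec: "M (Suc k) \<subseteq> M k" for k using H by (elim conjE) (erule spec)
    have Msub: "additive_subgroup (M k)" "\<And>r x. r\<in>R \<Longrightarrow> x \<in> M k \<Longrightarrow> act r x \<in> M k" for k
      using Hs[of k] unfolding isSub_def by blast+
    have Mmono: "k \<le> n \<Longrightarrow> M n \<subseteq> M k" for k n
      using lift_Suc_antimono_le[of M] Mdec by blast
    define P where "P k = f ` M k" for k
    define Q where "Q k = {x\<in>M k. f x = 0}" for k
    have "\<exists>N. \<forall>n\<ge>N. P n = P N"
    proof (rule art)
      show "\<forall>n. P n \<subseteq> R \<and> isSub R act (P n)"
      proof
        fix n
        have "additive_subgroup (P n)"
          unfolding additive_subgroup_def P_def
        proof (intro conjI ballI)
          show "0 \<in> f ` M n" using f0 as_0[OF Msub(1)] by force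
          fix u v assume "u \<in> f ` M n" "v \<in> f ` M n"
          then obtain x y where "x \<in> M n" "y \<in> M n" "u = f x" "v = f y" by blast
          then have "u - v = f (x - y)" "x - y \<in> M n" using fd[of x y] as_diff[OF Msub(1)] by simp_all
          then show "u - v \<in> f ` M n" by blast
        qed
        moreover have "\<forall>r\<in>R. \<forall>x\<in>P n. act r x \<in> P n"
        proof (intro ballI)
          fix r z assume r: "r \<in> R" and z: "z \<in> P n"
          then obtain x where x: "x \<in> M n" "z = f x" unfolding P_def by blast
          have "act r z = f (act r x)" using fa[OF r] x by simp
          then show "act r z \<in> P n" unfolding P_def using Msub(2)[OF r x(1)] by blast
        qed
        moreover have "P n \<subseteq> R" unfolding P_def using fR by blast
        ultimately show "P n \<subseteq> R \<and> isSub R act (P n)"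
          unfolding isSub_def by blast
      qed
      show "\<forall>n. P (Suc n) \<subseteq> P n" unfolding P_def using Mdec by (simp add: image_mono)
    qed
    then obtain N1 where N1: "\<forall>n\<ge>N1. P n = P N1" by blast
    have IH: "\<forall>M::nat\<Rightarrow>'a set. (\<forall>k. isSub R act (M k)) \<and> (\<forall>k. M (Suc k) \<subseteq> M k)
     \<and> (\<forall>k. \<forall>x\<in>M k. (\<forall>f\<in>F. f x = 0) \<longrightarrow> x = 0) \<longrightarrow> (\<exists>N. \<forall>n\<ge>N. M n = M N)"
    proof -
      have "\<forall>f\<in>F. goodF R act f" using HF by simp
      then show ?thesis using insert.IH by (rule rev_mp)
    qed
    have "\<exists>N. \<forall>n\<ge>N. Q n = Q N"
    proof (rule IH[rule_format], intro conjI allI)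
      fix k
      have "additive_subgroup (Q k)"
        unfolding additive_subgroup_def Q_def
        using as_0[OF Msub(1)] as_diff[OF Msub(1)] f0 fd by auto
      moreover have "\<forall>r\<in>R. \<forall>x\<in>Q k. act r x \<in> Q k"
      proof (intro ballI)
        fix r x assume "r \<in> R" "x \<in> Q k"
        then show "act r x \<in> Q k" unfolding Q_def using Msub(2)[of r x k] fa[of r x] act0[of r] by simp
      qed
      ultimately show "isSub R act (Q k)" unfolding isSub_def by blast
      show "Q (Suc k) \<subseteq> Q k" unfolding Q_def using Mdec by auto
      show "\<forall>x\<in>Q k. (\<forall>f\<in>F. f x = 0) \<longrightarrow> x = 0"
      proof (intro ballI impI)
        fix x assume "x \<in> Q k" "\<forall>f\<in>F. f x = 0"
        then have "x \<in> M k" "\<forall>g\<in>insert f F. g x = 0" unfolding Q_def by auto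
        then show "x = 0" using Hinj by blast
      qed
    qed
    then obtain N2 where N2: "\<forall>n\<ge>N2. Q n = Q N2" by blast
    define K where "K = max N1 N2"
    have "M n = M K" if "n \<ge> K" for n
    proof
      show "M n \<subseteq> M K" by (rule Mmono[OF that])
      show "M K \<subseteq> M n"
      proof
        fix x assume x: "x \<in> M K"
        have "N1 \<le> n" "N1 \<le> K" using that K_def by auto
        then have "P n = P K" using N1[rule_format, of n] N1[rule_format, of K] by simp
        moreover have "f x \<in> P K" unfolding P_def using x by (rule imageI)
        ultimately have "f x \<in> P n" by simp
        then have "f x \<in> f ` M n" unfolding P_def .
        then obtain y where y: "y \<in> M n" "f y = f x" by (metis imageE)
        have yK: "y \<in> M K" using y(1) Mmono[OF that] by (rule subsetD[rotated])
        have "x - y \<in> Q K" unfolding Q_def using x yK as_diff[OF Msub(1)] fd y by simp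
        moreover have "Q n = Q K"
        proof -
          have "N2 \<le> n" "N2 \<le> K" using that K_def by auto
          then show ?thesis using N2[rule_format, of n] N2[rule_format, of K] by simp
        qed
        ultimately have "x - y \<in> M n" unfolding Q_def by blast
        then have "(x - y) + y \<in> M n" using as_add[OF Msub(1)] y by blast
        then show "x \<in> M n" by simp
      qed
    qed
    then show "\<exists>N. \<forall>n\<ge>N. M n = M N" by blast
  qed
qed


definition gcomp :: "('g::group_add \<Rightarrow> 'a::ring_1 set) \<Rightarrow> 'a \<Rightarrow> 'g \<Rightarrow> 'a" where
  "gcomp S x = (THE f. finite {g. f g \<noteq> 0} \<and> (\<forall>g. f g \<in> S g) \<and> x = (\<Sum>g\<in>{g. f g \<noteq> 0}. f g))"

lemma gcomp_props:
  assumes "graded_ring S"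
  shows "finite {g. gcomp S x g \<noteq> 0} \<and> (\<forall>g. gcomp S x g \<in> S g) \<and> x = (\<Sum>g\<in>{g. gcomp S x g \<noteq> 0}. gcomp S x g)"
proof -
  have "\<exists>!f. finite {g. f g \<noteq> 0} \<and> (\<forall>g. f g \<in> S g) \<and> x = (\<Sum>g\<in>{g. f g \<noteq> 0}. f g)"
    using assms unfolding graded_ring_def by blast
  then show ?thesis unfolding gcomp_def by (rule theI')
qed

lemma gcomp_unique:
  fixes S :: "'g::group_add \<Rightarrow> 'a::ring_1 set"
  assumes gr: "graded_ring S" and fin: "finite A" and f: "\<forall>g. f g \<in> S g"
    and out: "\<forall>g. g \<notin> A \<longrightarrow> f g = 0" and x: "x = (\<Sum>g\<in>A. f g)"
  shows "gcomp S x = f"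
proof -
  have ex: "\<exists>!f. finite {g. f g \<noteq> 0} \<and> (\<forall>g. f g \<in> S g) \<and> x = (\<Sum>g\<in>{g. f g \<noteq> 0}. f g)"
    using gr unfolding graded_ring_def by blast
  have sub: "{g. f g \<noteq> 0} \<subseteq> A" using out by blast
  have fin2: "finite {g. f g \<noteq> 0}" using finite_subset[OF sub fin] .
  have "(\<Sum>g\<in>A. f g) = (\<Sum>g\<in>{g. f g \<noteq> 0}. f g)"
    by (rule sum.mono_neutral_right[OF fin sub]) simp
  then have "finite {g. f g \<noteq> 0} \<and> (\<forall>g. f g \<in> S g) \<and> x = (\<Sum>g\<in>{g. f g \<noteq> 0}. f g)"
    using fin2 f x by simp
  then show ?thesis unfolding gcomp_def by (rule the1_equality[OF ex])
qed

lemma gcomp_sum_over: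
  fixes S :: "'g::group_add \<Rightarrow> 'a::ring_1 set"
  assumes gr: "graded_ring S" and fin: "finite A" and sub: "{g. gcomp S x g \<noteq> 0} \<subseteq> A"
  shows "x = (\<Sum>g\<in>A. gcomp S x g)"
proof -
  have "(\<Sum>g\<in>A. gcomp S x g) = (\<Sum>g\<in>{g. gcomp S x g \<noteq> 0}. gcomp S x g)"
    by (rule sum.mono_neutral_right[OF fin sub]) simp
  then show ?thesis using gcomp_props[OF gr, of x] by simp
qed

lemma gr_sub: "graded_ring S \<Longrightarrow> additive_subgroup (S g)"
  unfolding graded_ring_def by blast
lemma gr_mul: "graded_ring S \<Longrightarrow> x \<in> S g \<Longrightarrow> y \<in> S h \<Longrightarrow> x * y \<in> S (g + h)"
  unfolding graded_ring_def by blast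

lemma gcomp_diff:
  fixes S :: "'g::group_add \<Rightarrow> 'a::ring_1 set"
  assumes gr: "graded_ring S"
  shows "gcomp S (x - y) g = gcomp S x g - gcomp S y g"
proof -
  define A where "A = {g. gcomp S x g \<noteq> 0} \<union> {g. gcomp S y g \<noteq> 0}"
  have fin: "finite A" unfolding A_def using gcomp_props[OF gr] by simp
  have "x = (\<Sum>g\<in>A. gcomp S x g)" by (rule gcomp_sum_over[OF gr fin]) (auto simp: A_def)
  moreover have "y = (\<Sum>g\<in>A. gcomp S y g)" by (rule gcomp_sum_over[OF gr fin]) (auto simp: A_def)
  ultimately have e: "x - y = (\<Sum>g\<in>A. gcomp S x g - gcomp S y g)" by (simp add: sum_subtractf)
  have "gcomp S (x - y) = (\<lambda>g. gcomp S x g - gcomp S y g)"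
  proof (rule gcomp_unique[OF gr fin _ _ e])
    show "\<forall>g. gcomp S x g - gcomp S y g \<in> S g"
      using gcomp_props[OF gr] as_diff[OF gr_sub[OF gr]] by blast
    show "\<forall>g. g \<notin> A \<longrightarrow> gcomp S x g - gcomp S y g = 0" unfolding A_def by simp
  qed
  then show ?thesis by simp
qed

lemma gcomp_lmul:
  fixes S :: "'g::group_add \<Rightarrow> 'a::ring_1 set"
  assumes gr: "graded_ring S" and r: "r \<in> S 0"
  shows "gcomp S (r * x) g = r * gcomp S x g"
proof -
  define A where "A = {g. gcomp S x g \<noteq> 0}"
  have fin: "finite A" unfolding A_def using gcomp_props[OF gr] by simp
  have "x = (\<Sum>g\<in>A. gcomp S x g)" by (rule gcomp_sum_over[OF gr fin]) (auto simp: A_def)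
  then have e: "r * x = (\<Sum>g\<in>A. r * gcomp S x g)"
    by (metis sum_distrib_left)
  have "gcomp S (r * x) = (\<lambda>g. r * gcomp S x g)"
  proof (rule gcomp_unique[OF gr fin _ _ e])
    show "\<forall>g. r * gcomp S x g \<in> S g"
    proof
      fix g show "r * gcomp S x g \<in> S g"
        using gr_mul[OF gr r, of "gcomp S x g" g] gcomp_props[OF gr, of x] by simp
    qed
    show "\<forall>g. g \<notin> A \<longrightarrow> r * gcomp S x g = 0" unfolding A_def by simp
  qed
  then show ?thesis by simp
qed

lemma gcomp_rmul:
  fixes S :: "'g::group_add \<Rightarrow> 'a::ring_1 set"
  assumes gr: "graded_ring S" and r: "r \<in> S 0"
  shows "gcomp S (x * r) g = gcomp S x g * r"
proof -
  define A where "A = {g. gcomp S x g \<noteq> 0}"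
  have fin: "finite A" unfolding A_def using gcomp_props[OF gr] by simp
  have "x = (\<Sum>g\<in>A. gcomp S x g)" by (rule gcomp_sum_over[OF gr fin]) (auto simp: A_def)
  then have e: "x * r = (\<Sum>g\<in>A. gcomp S x g * r)"
    by (metis sum_distrib_right)
  have "gcomp S (x * r) = (\<lambda>g. gcomp S x g * r)"
  proof (rule gcomp_unique[OF gr fin _ _ e])
    show "\<forall>g. gcomp S x g * r \<in> S g"
    proof
      fix g show "gcomp S x g * r \<in> S g"
        using gr_mul[OF gr _ r, of "gcomp S x g" g] gcomp_props[OF gr, of x] by simp
    qed
    show "\<forall>g. g \<notin> A \<longrightarrow> gcomp S x g * r = 0" unfolding A_def by simp
  qed
  then show ?thesis by simp
qed

lemma gcomp_zero:
  fixes S :: "'g::group_add \<Rightarrow> 'a::ring_1 set"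
  assumes gr: "graded_ring S" and z: "\<forall>g\<in>support S. gcomp S x g = 0"
  shows "x = 0"
proof -
  have "gcomp S x g = 0" for g
  proof (cases "g \<in> support S")
    case True then show ?thesis using z by blast
  next
    case False
    then have "S g = {0}" unfolding support_def by simp
    then show ?thesis using gcomp_props[OF gr, of x] by (metis singletonD)
  qed
  then have "{g. gcomp S x g \<noteq> 0} = {}" by simp
  then show ?thesis using gcomp_props[OF gr, of x] by simp
qed


lemma left_decomp:
  fixes S :: "'g::group_add \<Rightarrow> 'a::ring_1 set"
  assumes es: "epsilon_strongly_graded S"
  shows "\<exists>(n::nat) c d. (\<forall>i<n. c i \<in> S (- g) \<and> d i \<in> S g) \<and> (\<forall>s\<in>S g. s = (\<Sum>i<n. (s * c i) * d i))"
proof -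
  have E2: "setmul (setmul (S g) (S (- g))) (S g) = S g" using es unfolding epsilon_strongly_graded_def by blast
  have "has_mult_identity (setmul (S (- g)) (S (- (- g))))" using es unfolding epsilon_strongly_graded_def by blast
  then obtain u where u: "u \<in> setmul (S (- g)) (S g)"
    and uid: "\<And>z. z \<in> setmul (S (- g)) (S g) \<Longrightarrow> u * z = z \<and> z * u = z"
    unfolding has_mult_identity_def by auto
  have "\<exists>(n::nat) c d. (\<forall>i<n. c i \<in> S (- g) \<and> d i \<in> S g) \<and> u = (\<Sum>i<n. c i * d i)"
    using u unfolding setmul_def by simp
  then obtain n :: nat and c d where cd: "\<forall>i<n. c i \<in> S (- g) \<and> d i \<in> S g" and ue: "u = (\<Sum>i<n. c i * d i)"
    by blast
  have su: "s * u = s" if s: "s \<in> S g" for s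
  proof -
    have "s \<in> setmul (setmul (S g) (S (- g))) (S g)" using s E2 by simp
    then show ?thesis
    proof (rule setmul_induct)
      show "0 * u = 0" by simp
      show "(v + w) * u = v + w" if "v * u = v" "w * u = w" for v w using that by (simp add: distrib_right)
      fix a b assume a: "a \<in> setmul (S g) (S (- g))" and b: "b \<in> S g"
      from a show "a * b * u = a * b"
      proof (rule setmul_induct)
        show "0 * b * u = 0 * b" by simp
        show "(v + w) * b * u = (v + w) * b" if "v * b * u = v * b" "w * b * u = w * b" for v w
          using that by (simp add: distrib_right)
        fix x y assume x: "x \<in> S g" and y: "y \<in> S (- g)"
        have "y * b \<in> setmul (S (- g)) (S g)" using y b by (rule setmul_single)
        then have "y * b * u = y * b" using uid by blast
        then show "x * y * b * u = x * y * b" by (simp add: mult.assoc)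
      qed
    qed
  qed
  show ?thesis
  proof (intro exI conjI)
    show "\<forall>i<n. c i \<in> S (- g) \<and> d i \<in> S g" using cd .
    show "\<forall>s\<in>S g. s = (\<Sum>i<n. (s * c i) * d i)"
    proof
      fix s assume s: "s \<in> S g"
      have "s = s * u" using su[OF s] by simp
      also have "\<dots> = (\<Sum>i<n. s * (c i * d i))" unfolding ue by (rule sum_distrib_left)
      also have "\<dots> = (\<Sum>i<n. (s * c i) * d i)" by (simp add: mult.assoc)
      finally show "s = (\<Sum>i<n. (s * c i) * d i)" .
    qed
  qed
qed

lemma right_decomp:
  fixes S :: "'g::group_add \<Rightarrow> 'a::ring_1 set"
  assumes es: "epsilon_strongly_graded S"
  shows "\<exists>(n::nat) c d. (\<forall>i<n. c i \<in> S g \<and> d i \<in> S (- g)) \<and> (\<forall>s\<in>S g. s = (\<Sum>i<n. c i * (d i * s)))"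
proof -
  have E2: "setmul (setmul (S g) (S (- g))) (S g) = S g" using es unfolding epsilon_strongly_graded_def by blast
  have "has_mult_identity (setmul (S g) (S (- g)))" using es unfolding epsilon_strongly_graded_def by blast
  then obtain u where u: "u \<in> setmul (S g) (S (- g))"
    and uid: "\<And>z. z \<in> setmul (S g) (S (- g)) \<Longrightarrow> u * z = z \<and> z * u = z"
    unfolding has_mult_identity_def by auto
  have "\<exists>(n::nat) c d. (\<forall>i<n. c i \<in> S g \<and> d i \<in> S (- g)) \<and> u = (\<Sum>i<n. c i * d i)"
    using u unfolding setmul_def by simp
  then obtain n :: nat and c d where cd: "\<forall>i<n. c i \<in> S g \<and> d i \<in> S (- g)" and ue: "u = (\<Sum>i<n. c i * d i)"
    by blast
  have su: "u * s = s" if s: "s \<in> S g" for s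
  proof -
    have "s \<in> setmul (setmul (S g) (S (- g))) (S g)" using s E2 by simp
    then show ?thesis
    proof (rule setmul_induct)
      show "u * 0 = 0" by simp
      show "u * (v + w) = v + w" if "u * v = v" "u * w = w" for v w using that by (simp add: distrib_left)
      fix a b assume a: "a \<in> setmul (S g) (S (- g))" and b: "b \<in> S g"
      have "u * a = a" using uid[OF a] by blast
      then show "u * (a * b) = a * b" by (simp add: mult.assoc[symmetric])
    qed
  qed
  show ?thesis
  proof (intro exI conjI)
    show "\<forall>i<n. c i \<in> S g \<and> d i \<in> S (- g)" using cd .
    show "\<forall>s\<in>S g. s = (\<Sum>i<n. c i * (d i * s))"
    proof
      fix s assume s: "s \<in> S g"
      have "s = u * s" using su[OF s] by simp
      also have "\<dots> = (\<Sum>i<n. (c i * d i) * s)" unfolding ue by (rule sum_distrib_right)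
      also have "\<dots> = (\<Sum>i<n. c i * (d i * s))" by (simp add: mult.assoc)
      finally show "s = (\<Sum>i<n. c i * (d i * s))" .
    qed
  qed
qed


theorem proposition3p9:
  fixes S :: "'g::group_add \<Rightarrow> 'a::ring_1 set"
  assumes "epsilon_strongly_graded S"
    and "finite (support S)"
  shows "(left_artinian (S 0) \<longrightarrow> left_artinian (UNIV :: 'a set)) \<and>
         (right_artinian (S 0) \<longrightarrow> right_artinian (UNIV :: 'a set))"
proof -
  note es = assms(1)
  have gr: "graded_ring S" using es unfolding epsilon_strongly_graded_def by blast
  have gS: "gcomp S x g \<in> S g" for x g using gcomp_props[OF gr, of x] by blast
  have "\<forall>g. \<exists>(n::nat) c d. (\<forall>i<n. c i \<in> S (- g) \<and> d i \<in> S g) \<and> (\<forall>s\<in>S g. s = (\<Sum>i<n. (s * c i) * d i))"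
    using left_decomp[OF es] by blast
  then obtain nL :: "'g \<Rightarrow> nat" and cL dL where
    L: "\<And>g. (\<forall>i<nL g. cL g i \<in> S (- g) \<and> dL g i \<in> S g) \<and> (\<forall>s\<in>S g. s = (\<Sum>i<nL g. (s * cL g i) * dL g i))"
    by metis
  have "\<forall>g. \<exists>(n::nat) c d. (\<forall>i<n. c i \<in> S g \<and> d i \<in> S (- g)) \<and> (\<forall>s\<in>S g. s = (\<Sum>i<n. c i * (d i * s)))"
    using right_decomp[OF es] by blast
  then obtain nR :: "'g \<Rightarrow> nat" and cR dR where
    Rt: "\<And>g. (\<forall>i<nR g. cR g i \<in> S g \<and> dR g i \<in> S (- g)) \<and> (\<forall>s\<in>S g. s = (\<Sum>i<nR g. cR g i * (dR g i * s)))"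
    by metis
  have left: "left_artinian (UNIV :: 'a set)" if la: "left_artinian (S 0)"
  proof -
    define F where "F = (\<lambda>p. (\<lambda>x. gcomp S x (fst p) * cL (fst p) (snd p))) ` (SIGMA g:support S. {..<nL g})"
    have finF: "finite F" unfolding F_def using assms(2) by auto
    have art: "\<exists>N. \<forall>n\<ge>N. I n = I N" if h1: "\<forall>n. I n \<subseteq> S 0 \<and> isSub (S 0) (\<lambda>r x. r * x) (I n)"
      and h2: "\<forall>n. I (Suc n) \<subseteq> I n" for I
    proof -
      have "\<forall>n. left_ideal_of (S 0) (I n)" using h1 unfolding left_ideal_of_def isSub_def by simp
      then show ?thesis using la h2 unfolding left_artinian_def by blast
    qed
    have good: "\<forall>f\<in>F. goodF (S 0) (\<lambda>r x. r * x) f"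
    proof
      fix f assume "f \<in> F"
      then obtain g i where gi: "g \<in> support S" "i < nL g" and f: "f = (\<lambda>x. gcomp S x g * cL g i)"
        unfolding F_def by auto
      have c: "cL g i \<in> S (- g)" using L[of g] gi by blast
      show "goodF (S 0) (\<lambda>r x. r * x) f" unfolding goodF_def f
      proof (intro conjI allI ballI)
        fix x y show "gcomp S (x - y) g * cL g i = gcomp S x g * cL g i - gcomp S y g * cL g i"
          by (simp add: gcomp_diff[OF gr] left_diff_distrib)
      next
        fix x show "gcomp S x g * cL g i \<in> S 0" using gr_mul[OF gr gS[of x g] c] by simp
      next
        fix r x assume r: "r \<in> S 0"
        show "gcomp S (r * x) g * cL g i = r * (gcomp S x g * cL g i)"
          by (simp add: gcomp_lmul[OF gr r] mult.assoc)
      qed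
    qed
    show ?thesis unfolding left_artinian_def
    proof (intro allI impI)
      fix I :: "nat \<Rightarrow> 'a set"
      assume H: "(\<forall>n. left_ideal_of UNIV (I n)) \<and> (\<forall>n. I (Suc n) \<subseteq> I n)"
      have D: "\<forall>M::nat\<Rightarrow>'a set. (\<forall>k. isSub (S 0) (\<lambda>r x. r * x) (M k)) \<and> (\<forall>k. M (Suc k) \<subseteq> M k)
         \<and> (\<forall>k. \<forall>x\<in>M k. (\<forall>f\<in>F. f x = 0) \<longrightarrow> x = 0) \<longrightarrow> (\<exists>N. \<forall>n\<ge>N. M n = M N)"
        using dcc_transfer[of F "S 0" "\<lambda>r x. r * x", OF finF art] good by simp
      have "(\<forall>k. isSub (S 0) (\<lambda>r x. r * x) (I k))"
        using H unfolding left_ideal_of_def isSub_def by simp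
      moreover have "\<forall>k. I (Suc k) \<subseteq> I k" using H by simp
      moreover have "\<forall>k. \<forall>x\<in>I k. (\<forall>f\<in>F. f x = 0) \<longrightarrow> x = 0"
      proof (intro allI ballI impI)
        fix k x assume "\<forall>f\<in>F. f x = 0"
        then have z: "gcomp S x g * cL g i = 0" if "g \<in> support S" "i < nL g" for g i
          using that unfolding F_def by auto
        have "\<forall>g\<in>support S. gcomp S x g = 0"
        proof
          fix g assume g: "g \<in> support S"
          have "gcomp S x g = (\<Sum>i<nL g. (gcomp S x g * cL g i) * dL g i)" using L[of g] gS by blast
          also have "\<dots> = 0" using z[OF g] by simp
          finally show "gcomp S x g = 0" .
        qed
        then show "x = 0" by (rule gcomp_zero[OF gr])
      qed
      ultimately show "\<exists>N. \<forall>n\<ge>N. I n = I N" using D by blast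
    qed
  qed
  have right: "right_artinian (UNIV :: 'a set)" if ra: "right_artinian (S 0)"
  proof -
    define F where "F = (\<lambda>p. (\<lambda>x. dR (fst p) (snd p) * gcomp S x (fst p))) ` (SIGMA g:support S. {..<nR g})"
    have finF: "finite F" unfolding F_def using assms(2) by auto
    have art: "\<exists>N. \<forall>n\<ge>N. I n = I N" if h1: "\<forall>n. I n \<subseteq> S 0 \<and> isSub (S 0) (\<lambda>r x. x * r) (I n)"
      and h2: "\<forall>n. I (Suc n) \<subseteq> I n" for I
    proof -
      have "\<forall>n. right_ideal_of (S 0) (I n)" using h1 unfolding right_ideal_of_def isSub_def by simp
      then show ?thesis using ra h2 unfolding right_artinian_def by blast
    qed
    have good: "\<forall>f\<in>F. goodF (S 0) (\<lambda>r x. x * r) f"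
    proof
      fix f assume "f \<in> F"
      then obtain g i where gi: "g \<in> support S" "i < nR g" and f: "f = (\<lambda>x. dR g i * gcomp S x g)"
        unfolding F_def by auto
      have c: "dR g i \<in> S (- g)" using Rt[of g] gi by blast
      show "goodF (S 0) (\<lambda>r x. x * r) f" unfolding goodF_def f
      proof (intro conjI allI ballI)
        fix x y show "dR g i * gcomp S (x - y) g = dR g i * gcomp S x g - dR g i * gcomp S y g"
          by (simp add: gcomp_diff[OF gr] right_diff_distrib)
      next
        fix x show "dR g i * gcomp S x g \<in> S 0" using gr_mul[OF gr c gS[of x g]] by simp
      next
        fix r x assume r: "r \<in> S 0"
        show "dR g i * gcomp S (x * r) g = dR g i * gcomp S x g * r"
          by (simp add: gcomp_rmul[OF gr r] mult.assoc)
      qed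
    qed
    show ?thesis unfolding right_artinian_def
    proof (intro allI impI)
      fix I :: "nat \<Rightarrow> 'a set"
      assume H: "(\<forall>n. right_ideal_of UNIV (I n)) \<and> (\<forall>n. I (Suc n) \<subseteq> I n)"
      have D: "\<forall>M::nat\<Rightarrow>'a set. (\<forall>k. isSub (S 0) (\<lambda>r x. x * r) (M k)) \<and> (\<forall>k. M (Suc k) \<subseteq> M k)
         \<and> (\<forall>k. \<forall>x\<in>M k. (\<forall>f\<in>F. f x = 0) \<longrightarrow> x = 0) \<longrightarrow> (\<exists>N. \<forall>n\<ge>N. M n = M N)"
        using dcc_transfer[of F "S 0" "\<lambda>r x. x * r", OF finF art] good by simp
      have "(\<forall>k. isSub (S 0) (\<lambda>r x. x * r) (I k))"
        using H unfolding right_ideal_of_def isSub_def by simp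
      moreover have "\<forall>k. I (Suc k) \<subseteq> I k" using H by simp
      moreover have "\<forall>k. \<forall>x\<in>I k. (\<forall>f\<in>F. f x = 0) \<longrightarrow> x = 0"
      proof (intro allI ballI impI)
        fix k x assume "\<forall>f\<in>F. f x = 0"
        then have z: "dR g i * gcomp S x g = 0" if "g \<in> support S" "i < nR g" for g i
          using that unfolding F_def by auto
        have "\<forall>g\<in>support S. gcomp S x g = 0"
        proof
          fix g assume g: "g \<in> support S"
          have "gcomp S x g = (\<Sum>i<nR g. cR g i * (dR g i * gcomp S x g))" using Rt[of g] gS by blast
          also have "\<dots> = 0" using z[OF g] by simp
          finally show "gcomp S x g = 0" .
        qed
        then show "x = 0" by (rule gcomp_zero[OF gr])
      qed
      ultimately show "\<exists>N. \<forall>n\<ge>N. I n = I N" using D by blast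
    qed
  qed
  show ?thesis using left right by blast
qed

end
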